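(* The energy $W^+_{\mathrm{magic}}\colon\mathrm{GL}^+(2)\to\mathbb{R}$, \[ W^+_{\mathrm{magic}}(F)=\frac{\lambda_{\max}}{\lambda_{\min}}-\log\!\left(\frac{\lambda_{\max}}{\lambda_{\min}}\right)+\log\det F, \] where $\lambda_{\max}\ge\lambda_{\min}>0$ are the ordered singular values of $F$, is not polyconvex.
   Context: $\mathrm{GL}^+(2)=\{F\in\mathbb{R}^{2\times2}:\det F>0\}$. A function $W\colon\mathrm{GL}^+(2)\to\mathbb{R}$ is polyconvex if its extension $\widehat W\colon\mathbb{R}^{2\times2}\to\mathbb{R}\cup\{+\infty\}$ ($\widehat W=W$ on $\mathrm{GL}^+(2)$, $+\infty$ elsewhere) can be written as $\widehat W(F)=P(F,\det F)$ for all $F\in\mathbb{R}^{2\times2}$ with some convex function $P\colon\mathbb{R}^{2\times2}\times\mathbb{R}\to\mathbb{R}\cup\{+\infty\}$. *)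

theory Defs
  imports "HOL-Analysis.Analysis" "HOL-Library.Extended_Real"
begin

definition GLplus2 :: "(real^2^2) set" where
  "GLplus2 = {F. det F > 0}"

definition sq_sing_vals :: "real^2^2 \<Rightarrow> real set" where
  "sq_sing_vals F = {\<mu>. \<exists>v. v \<noteq> 0 \<and> (transpose F ** F) *v v = \<mu> *\<^sub>R v}"

definition lambda_max :: "real^2^2 \<Rightarrow> real" where
  "lambda_max F = sqrt (Max (sq_sing_vals F))"

definition lambda_min :: "real^2^2 \<Rightarrow> real" where
  "lambda_min F = sqrt (Min (sq_sing_vals F))"

definition W_magic_plus :: "real^2^2 \<Rightarrow> real" where
  "W_magic_plus F = lambda_max F / lambda_min F - ln (lambda_max F / lambda_min F) + ln (det F)"

definition ext_convex :: "('a::real_vector \<Rightarrow> ereal) \<Rightarrow> bool" where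
  "ext_convex P \<longleftrightarrow> (\<forall>x y t. 0 < t \<and> t < 1 \<longrightarrow>
      P ((1 - t) *\<^sub>R x + t *\<^sub>R y) \<le> ereal (1 - t) * P x + ereal t * P y)"

definition extend_GLplus :: "(real^2^2 \<Rightarrow> real) \<Rightarrow> real^2^2 \<Rightarrow> ereal" where
  "extend_GLplus W F = (if F \<in> GLplus2 then ereal (W F) else \<infinity>)"

definition polyconvex2 :: "(real^2^2 \<Rightarrow> real) \<Rightarrow> bool" where
  "polyconvex2 W \<longleftrightarrow> (\<exists>P :: (real^2^2) \<times> real \<Rightarrow> ereal.
      (\<forall>z. P z \<noteq> -\<infinity>) \<and> ext_convex P \<and> (\<forall>F. extend_GLplus W F = P (F, det F)))"

end

theory Submission
  imports Defs
begin

definition mkd :: "real \<Rightarrow> real \<Rightarrow> real^2^2" where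
  "mkd a b = (\<chi> i j. if i = j then (if i = 1 then a else b) else 0)"

lemma mkd_comb: "(1 - t) *\<^sub>R mkd a b + t *\<^sub>R mkd c d = mkd ((1-t)*a + t*c) ((1-t)*b + t*d)"
  by (simp add: vec_eq_iff forall_2 mkd_def)

lemma det_mkd: "det (mkd a b) = a * b"
  by (simp add: det_2 mkd_def)

lemma tt_mkd: "transpose (mkd a b) ** mkd a b = mkd (a^2) (b^2)"
  by (simp add: vec_eq_iff forall_2 mkd_def matrix_matrix_mult_def transpose_def sum_2 power2_eq_square)

lemma eig_mkd: "{\<mu>. \<exists>v. v \<noteq> 0 \<and> mkd c d *v v = \<mu> *\<^sub>R v} = {c, d}"
proof (intro set_eqI iffI)
  fix \<mu> assume "\<mu> \<in> {\<mu>. \<exists>v. v \<noteq> 0 \<and> mkd c d *v v = \<mu> *\<^sub>R v}"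
  then obtain v where v: "v \<noteq> (0::real^2)" "mkd c d *v v = \<mu> *\<^sub>R v" by auto
  have e1: "c * v$1 = \<mu> * v$1" and e2: "d * v$2 = \<mu> * v$2"
    using v(2) by (simp_all add: vec_eq_iff forall_2 mkd_def matrix_vector_mult_def sum_2)
  have "v$1 \<noteq> 0 \<or> v$2 \<noteq> 0" using v(1) by (auto simp: vec_eq_iff forall_2)
  then show "\<mu> \<in> {c, d}" using e1 e2 by auto
next
  fix \<mu> assume "\<mu> \<in> {c, d}"
  then show "\<mu> \<in> {\<mu>. \<exists>v. v \<noteq> 0 \<and> mkd c d *v v = \<mu> *\<^sub>R v}"
  proof
    assume "\<mu> = c"
    then show ?thesis
      by (auto intro!: exI[of _ "axis 1 1"] simp: vec_eq_iff forall_2 mkd_def matrix_vector_mult_def sum_2 axis_def)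
  next
    assume "\<mu> \<in> {d}"
    then show ?thesis
      by (auto intro!: exI[of _ "axis 2 1"] simp: vec_eq_iff forall_2 mkd_def matrix_vector_mult_def sum_2 axis_def)
  qed
qed

lemma W_mkd:
  assumes "a > 0" "b > 0"
  shows "W_magic_plus (mkd a b) = max a b / min a b - ln (max a b / min a b) + ln (a * b)"
proof -
  have s: "sq_sing_vals (mkd a b) = {a^2, b^2}"
    unfolding sq_sing_vals_def tt_mkd eig_mkd ..
  have "Max {a^2, b^2} = (max a b)^2" using assms
    by (auto simp: max_def power_mono)
  moreover have "Min {a^2, b^2} = (min a b)^2" using assms
    by (auto simp: min_def power_mono)
  ultimately have "lambda_max (mkd a b) = max a b" "lambda_min (mkd a b) = min a b"
    using assms by (simp_all add: lambda_max_def lambda_min_def s)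
  then show ?thesis by (simp add: W_magic_plus_def det_mkd)
qed

lemma W_le:
  assumes "a > 0" "b > 0"
  shows "W_magic_plus (mkd a b) \<le> a/b + b/a + a*b"
proof -
  have r1: "max a b / min a b \<ge> 1" using assms by (auto simp: max_def min_def)
  have "ln (max a b / min a b) \<ge> 0" using r1 by simp
  moreover have "max a b / min a b \<le> a/b + b/a" using assms
    by (auto simp: max_def min_def)
  moreover have "ln (a*b) \<le> a*b" using assms
    by (meson ln_le_minus_one less_eq_real_def mult_pos_pos order_trans diff_le_self zero_le_one ln_less_self)
  ultimately show ?thesis using W_mkd[OF assms] by linarith
qed

lemma mkd_half: "(1/2) *\<^sub>R mkd a b + (1/2) *\<^sub>R mkd c d = mkd ((a+c)/2) ((b+d)/2)"
  by (simp add: vec_eq_iff forall_2 mkd_def)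

lemma half_step:
  fixes P :: "(real^2^2) \<times> real \<Rightarrow> ereal"
  assumes cv: "ext_convex P" and nm: "\<forall>z. P z \<noteq> -\<infinity>"
    and hx: "P x \<le> ereal a" and hy: "P y \<le> ereal b"
  shows "P ((1/2) *\<^sub>R x + (1/2) *\<^sub>R y) \<le> ereal ((a+b)/2)"
proof -
  obtain x' where x': "P x = ereal x'" "x' \<le> a" using hx nm[rule_format, of x] by (cases "P x") auto
  obtain y' where y': "P y = ereal y'" "y' \<le> b" using hy nm[rule_format, of y] by (cases "P y") auto
  have "P ((1 - 1/2) *\<^sub>R x + (1/2) *\<^sub>R y) \<le> ereal (1 - 1/2) * P x + ereal (1/2) * P y"
    by (rule cv[unfolded ext_convex_def, rule_format]) simp
  then have "P ((1/2) *\<^sub>R x + (1/2) *\<^sub>R y) \<le> ereal ((x' + y')/2)"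
    using x' y' by (simp add: add_divide_distrib)
  also have "\<dots> \<le> ereal ((a+b)/2)" using x' y' by simp
  finally show ?thesis .
qed

theorem lemma4p3:
  shows "\<not> polyconvex2 W_magic_plus"
proof
  assume "polyconvex2 W_magic_plus"
  then obtain P :: "(real^2^2) \<times> real \<Rightarrow> ereal" where nm: "\<forall>z. P z \<noteq> -\<infinity>"
    and cv: "ext_convex P" and gr: "\<forall>F. extend_GLplus W_magic_plus F = P (F, det F)"
    unfolding polyconvex2_def by blast
  have Pd: "P (mkd a b, a*b) = ereal (W_magic_plus (mkd a b))" if "a > 0" "b > 0" for a b
    using gr[rule_format, of "mkd a b"] that
    by (simp add: extend_GLplus_def GLplus2_def det_mkd)
  have key: "P (mkd 1 1, 2) \<le> ereal ((1 + 2 * ln e + 42) / 2)" if e: "0 < e" "e \<le> 1/10" for e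
  proof -
    define a1 b1 a2 b2 where "a1 = 2 + 3*e" "b1 = 3*(2-e)/2" "a2 = 2 - 5*e" "b2 = (2-e)/2"
    have pos: "a1 > 0" "b1 > 0" "a2 > 0" "b2 > 0" using e by (simp_all add: a1_b1_a2_b2_def)
    have WA: "W_magic_plus (mkd a1 b1) \<le> 20"
    proof -
      have "a1 \<le> 2*b1" "b1 \<le> 2*a1" "a1 \<le> 3" "b1 \<le> 3" using e by (simp_all add: a1_b1_a2_b2_def)
      moreover have "a1*b1 \<le> 3*3" by (rule mult_mono) (use pos \<open>a1 \<le> 3\<close> \<open>b1 \<le> 3\<close> in auto)
      ultimately have "a1/b1 \<le> 2" "b1/a1 \<le> 2" "a1*b1 \<le> 3*3" using pos
        by (simp_all add: divide_simps)
      then have "a1/b1 \<le> 2" "b1/a1 \<le> 2" "a1*b1 \<le> 16" by simp_all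
      then show ?thesis using W_le[OF pos(1,2)] by linarith
    qed
    have WB: "W_magic_plus (mkd a2 b2) \<le> 22"
    proof -
      have "a2 \<le> 4*b2" "b2 \<le> 2*a2" "a2 \<le> 3" "b2 \<le> 3" using e by (simp_all add: a1_b1_a2_b2_def)
      moreover have "a2*b2 \<le> 3*3" by (rule mult_mono) (use pos \<open>a2 \<le> 3\<close> \<open>b2 \<le> 3\<close> in auto)
      ultimately have "a2/b2 \<le> 4" "b2/a2 \<le> 2" "a2*b2 \<le> 3*3" using pos
        by (simp_all add: divide_simps)
      then have "a2/b2 \<le> 4" "b2/a2 \<le> 2" "a2*b2 \<le> 16" by simp_all
      then show ?thesis using W_le[OF pos(3,4)] by linarith
    qed
    have u: "(mkd (2-e) (2-e), 4 - e^2) = (1/2) *\<^sub>R (mkd a1 b1, a1*b1) + (1/2) *\<^sub>R (mkd a2 b2, a2*b2)"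
    proof -
      have h: "(a1+a2)/2 = 2-e" "(b1+b2)/2 = 2-e" "a1*b1/2 + a2*b2/2 = 4 - e^2"
        by (simp_all add: a1_b1_a2_b2_def field_simps power2_eq_square)
      have "(1/2) *\<^sub>R (mkd a1 b1, a1*b1) + (1/2) *\<^sub>R (mkd a2 b2, a2*b2)
          = ((1/2) *\<^sub>R mkd a1 b1 + (1/2) *\<^sub>R mkd a2 b2, a1*b1/2 + a2*b2/2)" by simp
      also have "\<dots> = (mkd (2-e) (2-e), 4 - e^2)" unfolding mkd_half h ..
      finally show ?thesis by simp
    qed
    have Pu: "P (mkd (2-e) (2-e), 4 - e^2) \<le> ereal ((20 + 22)/2)"
      unfolding u
      by (rule half_step[OF cv nm]) (use Pd pos WA WB in auto)
    have z: "(mkd 1 1, 2) = (1/2) *\<^sub>R (mkd e e, e*e) + (1/2) *\<^sub>R (mkd (2-e) (2-e), 4 - e^2)"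
      by (simp add: mkd_half algebra_simps power2_eq_square)
    have We: "W_magic_plus (mkd e e) = 1 + 2 * ln e"
      using W_mkd[of e e] e by (simp add: ln_mult)
    have Pe: "P (mkd e e, e*e) \<le> ereal (1 + 2 * ln e)"
      using Pd[of e e] e We by simp
    show ?thesis unfolding z
      by (rule order_trans[OF half_step[OF cv nm Pe Pu]]) simp
  qed
  obtain p where p: "P (mkd 1 1, 2) = ereal p"
    using key[of "1/10"] nm by (cases "P (mkd 1 1, 2)") auto
  define e where "e = exp (-(\<bar>p\<bar> + 30))"
  have e0: "0 < e" by (simp add: e_def)
  have "exp (-(\<bar>p\<bar> + 30)) \<le> exp (-30::real)" by simp
  moreover have "exp (-30::real) \<le> 1/10"
  proof -
    have "1 + 30 \<le> exp (30::real)" using exp_ge_add_one_self[of 30] by simp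
    then show ?thesis by (simp add: exp_minus field_simps)
  qed
  ultimately have e1: "e \<le> 1/10" unfolding e_def by (rule order_trans)
  have "p \<le> (1 + 2 * ln e + 42) / 2" using key[OF e0 e1] p by simp
  moreover have "ln e = -(\<bar>p\<bar> + 30)" by (simp add: e_def)
  ultimately show False by (cases "p \<ge> 0") auto
qed

end
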